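(* For any $\delta>0$ and any integer $s\in\{0,1,\dots,n\}$ with $s>8\log\frac{4}{\delta}$, the algorithm $C_s$ is $(\varepsilon,\frac{1}{2}\delta)$-differentially private for \[ \varepsilon=\sqrt{\frac{32\log\frac{4}{\delta}}{s}}\cdot\left(1-\frac{s}{n}\right). \]
   Context: For $s\in\{0,\dots,n\}$, the algorithm $C_s$ on input $(x_1,\dots,x_n)\in\{0,1\}^n$ chooses $H$ uniformly at random among subsets of $[n]$ of size $s$, draws $B\sim\mathrm{Bin}(s,1/2)$ independently, and outputs $\sum_{i\notin H}x_i+B$. An algorithm $M$ on $\{0,1\}^n$ is $(\varepsilon,\delta)$-differentially private if for all $X,X'$ differing in one coordinate and every set $W$ of outputs, $\Pr[M(X)\in W]\le e^{\varepsilon}\Pr[M(X')\in W]+\delta$. $\log$ is the natural logarithm. *)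

theory Defs
  imports "HOL-Probability.Probability"
begin

text \<open>Inputs \<open>X \<in> {0,1}^n\<close> are boolean lists of length n (True = 1).\<close>

definition C_alg :: "nat \<Rightarrow> nat \<Rightarrow> bool list \<Rightarrow> nat pmf" where
  "C_alg n s X =
     do { H \<leftarrow> pmf_of_set {H. H \<subseteq> {..<n} \<and> card H = s};
          B \<leftarrow> binomial_pmf s (1/2);
          return_pmf ((\<Sum>i\<in>{..<n} - H. of_bool (X ! i)) + B) }"

definition neighbouring :: "nat \<Rightarrow> bool list \<Rightarrow> bool list \<Rightarrow> bool" where
  "neighbouring n X X' \<longleftrightarrow> length X = n \<and> length X' = n \<and>
     (\<exists>i<n. \<forall>j<n. j \<noteq> i \<longrightarrow> X ! j = X' ! j)"

definition diff_private :: "nat \<Rightarrow> (bool list \<Rightarrow> 'b pmf) \<Rightarrow> real \<Rightarrow> real \<Rightarrow> bool" where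
  "diff_private n M \<epsilon> \<delta> \<longleftrightarrow>
     (\<forall>X X' W. neighbouring n X X' \<longrightarrow>
        measure_pmf.prob (M X) W \<le> exp \<epsilon> * measure_pmf.prob (M X') W + \<delta>)"

end

theory Submission
  imports Defs
begin

abbreviation Bin :: "nat \<Rightarrow> nat pmf" where "Bin s \<equiv> binomial_pmf s (1/2)"

lemma set_Bin: "set_pmf (Bin s) = {..s}"
  by (simp add: set_pmf_binomial_eq)

lemma pmf_Bin: "pmf (Bin s) k = real (s choose k) / 2 ^ s"
proof (cases "k \<le> s")
  case True
  have "(1/2::real) ^ k * (1 - 1/2) ^ (s - k) = (1/2) ^ (k + (s - k))"
    by (simp add: power_add)
  also have "k + (s - k) = s" using True by simp
  finally show ?thesis by (simp add: pmf_binomial power_divide)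
next
  case False
  then show ?thesis by (simp add: pmf_binomial binomial_eq_0)
qed

lemma pmf_Suc_Bin: "pmf (map_pmf Suc (Bin s)) m = (if m = 0 then 0 else pmf (Bin s) (m - 1))"
proof (cases m)
  case 0
  then show ?thesis by (auto intro!: pmf_map_outside)
next
  case (Suc k)
  then show ?thesis using pmf_map_inj'[of Suc "Bin s" k] by (simp add: inj_def)
qed

lemma choose_ratio: "real (Suc k) * real (s choose Suc k) = real (s - k) * real (s choose k)"
proof -
  have "Suc k * (s choose Suc k) = (s - k) * (s choose k)"
    using binomial_absorption[of k s] binomial_absorb_comp[of s k] by simp
  then show ?thesis by (metis of_nat_mult)
qed

lemma ratio1:
  fixes e0 :: real
  assumes e0: "e0 \<ge> 0" and m: "real m \<ge> (real s + 1) / (2 + e0)"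
  shows "pmf (Bin s) m \<le> (1 + e0) * pmf (map_pmf Suc (Bin s)) m"
proof (cases "m \<le> s")
  case False
  then show ?thesis using e0 by (simp add: pmf_Bin pmf_Suc_Bin binomial_eq_0)
next
  case True
  have "real m * (2 + e0) \<ge> real s + 1" using m e0 by (simp add: field_simps)
  then have "m \<noteq> 0" using e0 by (cases "m = 0") auto
  then obtain k where k: "m = Suc k" by (cases m) auto
  have key: "real (s - k) \<le> (1 + e0) * real (Suc k)"
    using \<open>real m * (2 + e0) \<ge> real s + 1\<close> True k by (simp add: of_nat_diff algebra_simps)
  have "real (Suc k) * real (s choose Suc k) = real (s - k) * real (s choose k)" by (rule choose_ratio)
  also have "\<dots> \<le> (1 + e0) * real (Suc k) * real (s choose k)"
    using key by (intro mult_right_mono) auto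
  finally have "real (s choose Suc k) \<le> (1 + e0) * real (s choose k)"
    by (simp add: mult.commute mult.left_commute)
  then show ?thesis using k by (simp add: pmf_Bin pmf_Suc_Bin divide_right_mono mult.assoc)
qed

lemma ratio2:
  fixes e0 :: real
  assumes e0: "e0 \<ge> 0" and m: "real m \<le> (1 + e0) * (real s + 1) / (2 + e0)"
  shows "pmf (map_pmf Suc (Bin s)) m \<le> (1 + e0) * pmf (Bin s) m"
proof (cases m)
  case 0
  then show ?thesis using e0 by (simp add: pmf_Suc_Bin)
next
  case (Suc k)
  have h: "real m * (2 + e0) \<le> (1 + e0) * (real s + 1)" using m e0 by (simp add: field_simps)
  show ?thesis
  proof (cases "k < s")
    case False
    have "m \<ge> s + 1" using False Suc by simp
    then have "real m * (2 + e0) \<ge> (real s + 1) * (2 + e0)" using e0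
      by (intro mult_right_mono) auto
    with h have False using e0 by (simp add: algebra_simps)
    then show ?thesis ..
  next
    case True
    have key: "real (Suc k) \<le> (1 + e0) * real (s - k)"
    proof -
      have "real (s - k) = real s - real k" using True by (simp add: of_nat_diff)
      moreover have "real m = real k + 1" using Suc by simp
      moreover have "(real k + 1) * (2 + e0) = (real k + 1) + (1 + e0) * (real k + 1)"
        by (simp add: algebra_simps)
      moreover have "(1 + e0) * (real s - real k) = (1 + e0) * (real s + 1) - (1 + e0) * (real k + 1)"
        by (simp add: algebra_simps)
      ultimately show ?thesis using h by simp
    qed
    have "real (Suc k) * real (s choose k) \<le> (1 + e0) * real (s - k) * real (s choose k)"
      by (rule mult_right_mono[OF key]) simp
    also have "\<dots> = (1 + e0) * (real (Suc k) * real (s choose Suc k))"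
      using choose_ratio[of k s] by simp
    finally have "real (s choose k) \<le> (1 + e0) * real (s choose Suc k)"
      by (simp add: mult.commute mult.left_commute)
    then show ?thesis using Suc by (simp add: pmf_Bin pmf_Suc_Bin divide_right_mono mult.assoc)
  qed
qed

lemma pointwise:
  fixes x w q e0 :: real
  assumes x: "x \<ge> 0" and w: "w \<ge> 0" and q: "0 \<le> q" "q \<le> 1" and e0: "e0 \<ge> 0"
    and xw: "x \<le> (1 + e0) * w"
  shows "x \<le> exp (q * e0) * ((1 - q) * x + q * w)"
    and "(1 - q) * w + q * x \<le> exp (q * e0) * w"
proof -
  define z where "z = q * e0"
  have z0: "z \<ge> 0" using q e0 by (simp add: z_def)
  have ze: "z \<le> e0" using q e0 by (simp add: z_def mult_left_le_one_le)
  have ez: "1 + z \<le> exp z" by (rule exp_ge_add_one_self)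
  have A: "0 \<le> (1 - q) * x + q * w" using q x w by simp
  have B: "(1 + e0) * ((1 - q) * x + q * w) \<ge> (1 + e0 - z) * x"
  proof -
    have "(1 + e0) * ((1 - q) * x + q * w) = (1 + e0) * (1 - q) * x + q * ((1 + e0) * w)"
      by (simp add: algebra_simps)
    also have "\<dots> \<ge> (1 + e0) * (1 - q) * x + q * x"
      using xw q by (simp add: mult_left_mono)
    finally show ?thesis by (simp add: z_def algebra_simps)
  qed
  have C: "(1 + z) * (1 + e0 - z) \<ge> 1 + e0"
  proof -
    have "(1 + z) * (1 + e0 - z) = 1 + e0 + z * (e0 - z)" by (simp add: algebra_simps)
    moreover have "z * (e0 - z) \<ge> 0" using z0 ze by simp
    ultimately show ?thesis by simp
  qed
  have "(1 + e0) * x \<le> (1 + z) * (1 + e0 - z) * x" using C x by (simp add: mult_right_mono)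
  also have "\<dots> \<le> (1 + z) * ((1 + e0) * ((1 - q) * x + q * w))"
    using B z0 by (simp add: mult_left_mono mult.assoc)
  also have "\<dots> \<le> exp z * ((1 + e0) * ((1 - q) * x + q * w))"
    using ez A e0 by (intro mult_right_mono) auto
  finally have "(1 + e0) * x \<le> (1 + e0) * (exp z * ((1 - q) * x + q * w))"
    by (simp add: algebra_simps)
  then show "x \<le> exp (q * e0) * ((1 - q) * x + q * w)"
    using e0 by (simp add: z_def)
  have "(1 - q) * w + q * x \<le> (1 - q) * w + q * ((1 + e0) * w)"
    using xw q by (simp add: mult_left_mono)
  also have "\<dots> = (1 + z) * w" by (simp add: z_def algebra_simps)
  also have "\<dots> \<le> exp z * w" using ez w by (rule mult_right_mono)
  finally show "(1 - q) * w + q * x \<le> exp (q * e0) * w" by (simp add: z_def)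
qed

lemma sum_split:
  fixes L R :: "nat \<Rightarrow> real"
  assumes "finite V" "\<And>m. m \<in> V - B \<Longrightarrow> L m \<le> E * R m" "\<And>m. R m \<ge> 0" "E \<ge> 0"
    "sum L (V \<inter> B) \<le> d"
  shows "sum L V \<le> E * sum R V + d"
proof -
  have "sum L V = sum L (V \<inter> B) + sum L (V - B)"
    using assms(1) by (metis Diff_eq sum.Int_Diff)
  also have "sum L (V - B) \<le> sum (\<lambda>m. E * R m) (V - B)"
    using assms(2) by (rule sum_mono)
  also have "\<dots> = E * sum R (V - B)" by (simp add: sum_distrib_left)
  also have "sum R (V - B) \<le> sum R V"
    using assms(1,3) by (intro sum_mono2) auto
  then have "E * sum R (V - B) \<le> E * sum R V" using assms(4) by (rule mult_left_mono)
  finally show ?thesis using assms(5) by linarith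
qed

lemma core_real:
  fixes a b :: "nat \<Rightarrow> real" and q e0 d :: real
  assumes V: "finite V" and a: "\<And>m. a m \<ge> 0" and b: "\<And>m. b m \<ge> 0"
    and q: "0 \<le> q" "q \<le> 1" and e0: "e0 \<ge> 0"
    and ab: "\<And>m. m \<in> V - B \<Longrightarrow> a m \<le> (1 + e0) * b m"
    and ta: "sum a (V \<inter> B) \<le> d" and tb: "sum b (V \<inter> B) \<le> d"
  shows "(1 - q) * sum a V + q * sum a V \<le> exp (q * e0) * ((1 - q) * sum a V + q * sum b V) + d"
    and "(1 - q) * sum b V + q * sum a V \<le> exp (q * e0) * ((1 - q) * sum b V + q * sum b V) + d"
proof -
  have dd: "(1 - q) * sum Y (V \<inter> B) + q * sum a (V \<inter> B) \<le> d"
    if "sum Y (V \<inter> B) \<le> d" for Y :: "nat \<Rightarrow> real"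
  proof -
    have "(1 - q) * sum Y (V \<inter> B) \<le> (1 - q) * d" using that q by (simp add: mult_left_mono)
    moreover have "q * sum a (V \<inter> B) \<le> q * d" using ta q by (simp add: mult_left_mono)
    ultimately show ?thesis by (simp add: algebra_simps)
  qed
  have "sum (\<lambda>m. (1 - q) * a m + q * a m) V
        \<le> exp (q * e0) * sum (\<lambda>m. (1 - q) * a m + q * b m) V + d"
  proof (rule sum_split[OF V])
    show "(1 - q) * a m + q * a m \<le> exp (q * e0) * ((1 - q) * a m + q * b m)" if "m \<in> V - B" for m
      using pointwise(1)[OF a b q e0 ab[OF that]] by (simp add: algebra_simps)
    show "0 \<le> (1 - q) * a m + q * b m" for m using a b q by simp
    show "sum (\<lambda>m. (1 - q) * a m + q * a m) (V \<inter> B) \<le> d"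
      using dd[OF ta] by (simp add: sum.distrib sum_distrib_left)
  qed simp
  then show "(1 - q) * sum a V + q * sum a V \<le> exp (q * e0) * ((1 - q) * sum a V + q * sum b V) + d"
    by (simp add: sum.distrib sum_distrib_left)
  have "sum (\<lambda>m. (1 - q) * b m + q * a m) V
        \<le> exp (q * e0) * sum (\<lambda>m. (1 - q) * b m + q * b m) V + d"
  proof (rule sum_split[OF V])
    show "(1 - q) * b m + q * a m \<le> exp (q * e0) * ((1 - q) * b m + q * b m)" if "m \<in> V - B" for m
      using pointwise(2)[OF a b q e0 ab[OF that]] by (simp add: algebra_simps)
    show "0 \<le> (1 - q) * b m + q * b m" for m using b q by simp
    show "sum (\<lambda>m. (1 - q) * b m + q * a m) (V \<inter> B) \<le> d"
      using dd[OF tb] by (simp add: sum.distrib sum_distrib_left)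
  qed simp
  then show "(1 - q) * sum b V + q * sum a V \<le> exp (q * e0) * ((1 - q) * sum b V + q * sum b V) + d"
    by (simp add: sum.distrib sum_distrib_left)
qed

lemma prob_as_sum:
  fixes M :: "nat pmf"
  assumes "set_pmf M \<subseteq> {..N}"
  shows "measure_pmf.prob M Z = sum (pmf M) {m\<in>Z. m \<le> N}"
proof -
  have "measure_pmf.prob M Z = measure_pmf.prob M (Z \<inter> set_pmf M)"
    by (simp add: measure_Int_set_pmf)
  also have "Z \<inter> set_pmf M = {m\<in>Z. m \<le> N} \<inter> set_pmf M" using assms by auto
  also have "measure_pmf.prob M \<dots> = measure_pmf.prob M {m\<in>Z. m \<le> N}"
    by (simp add: measure_Int_set_pmf)
  also have "\<dots> = sum (pmf M) {m\<in>Z. m \<le> N}"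
    by (rule measure_measure_pmf_finite) simp
  finally show ?thesis .
qed

lemma P0_sum: "measure_pmf.prob (Bin s) {b. A + b \<in> W} = sum (pmf (Bin s)) {m. A + m \<in> W \<and> m \<le> Suc s}"
proof -
  have "measure_pmf.prob (Bin s) {b. A + b \<in> W} = sum (pmf (Bin s)) {m\<in>{b. A + b \<in> W}. m \<le> Suc s}"
    by (rule prob_as_sum) (auto simp: set_Bin)
  then show ?thesis by simp
qed

lemma P1_sum: "measure_pmf.prob (Bin s) {b. A + 1 + b \<in> W} =
    sum (pmf (map_pmf Suc (Bin s))) {m. A + m \<in> W \<and> m \<le> Suc s}"
proof -
  have "measure_pmf.prob (Bin s) {b. A + 1 + b \<in> W} = measure_pmf.prob (map_pmf Suc (Bin s)) {m. A + m \<in> W}"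
    by (simp add: measure_map_pmf vimage_def)
  also have "\<dots> = sum (pmf (map_pmf Suc (Bin s))) {m\<in>{m. A + m \<in> W}. m \<le> Suc s}"
    by (rule prob_as_sum) (auto simp: set_Bin)
  finally show ?thesis by simp
qed

lemma sum_pmf_le: "finite F \<Longrightarrow> F \<subseteq> Z \<Longrightarrow> sum (pmf M) F \<le> measure_pmf.prob M Z"
  by (metis measure_measure_pmf_finite measure_pmf.finite_measure_mono sets_measure_pmf UNIV_I)

lemma core:
  fixes q e0 d :: real and s A y u v :: nat
  assumes q: "0 \<le> q" "q \<le> 1" and e0: "e0 \<ge> 0"
    and lo: "measure_pmf.prob (Bin s) {x. real x < (real s + 1) / (2 + e0)} \<le> d"
    and hi: "measure_pmf.prob (Bin s) {x. (1 + e0) * (real s + 1) / (2 + e0) < real x + 1} \<le> d"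
    and y: "y \<le> 1" and u: "u \<le> 1" and v: "v \<le> 1"
  shows "(1 - q) * measure_pmf.prob (Bin s) {b. A + y + b \<in> W} + q * measure_pmf.prob (Bin s) {b. A + u + b \<in> W}
     \<le> exp (q * e0) * ((1 - q) * measure_pmf.prob (Bin s) {b. A + y + b \<in> W}
                        + q * measure_pmf.prob (Bin s) {b. A + v + b \<in> W}) + d"
proof -
  define V where "V = {m. A + m \<in> W \<and> m \<le> Suc s}"
  define a where "a = pmf (Bin s)"
  define b where "b = pmf (map_pmf Suc (Bin s))"
  have V: "finite V" unfolding V_def by simp
  have P0: "measure_pmf.prob (Bin s) {b. A + 0 + b \<in> W} = sum a V"
    unfolding a_def V_def using P0_sum[of s A W] by simp
  have P1: "measure_pmf.prob (Bin s) {b. A + 1 + b \<in> W} = sum b V"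
    unfolding b_def V_def by (rule P1_sum)
  have a0: "a m \<ge> 0" and b0: "b m \<ge> 0" for m unfolding a_def b_def by simp_all
  have d0: "d \<ge> 0" using lo measure_nonneg[of "measure_pmf (Bin s)"] by (meson order_trans)
  have q1: "0 \<le> 1 - q" using q by simp
  show ?thesis
  proof (cases "u = v")
    case True
    define R where "R = (1 - q) * measure_pmf.prob (Bin s) {b. A + y + b \<in> W} + q * measure_pmf.prob (Bin s) {b. A + v + b \<in> W}"
    have R0: "R \<ge> 0" unfolding R_def using q1 q by simp
    have "R \<le> exp (q * e0) * R" using R0 q e0 by (simp add: mult_le_cancel_right1)
    then show ?thesis using True d0 by (simp add: R_def)
  next
    case False
    then have uv: "(u = 0 \<and> v = 1) \<or> (u = 1 \<and> v = 0)" using u v by auto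
    have yy: "y = 0 \<or> y = 1" using y by auto
    show ?thesis
    proof (cases "u = 0")
      case True
      with uv have vv: "v = 1" by simp
      define B where "B = {m. real m < (real s + 1) / (2 + e0)}"
      have ab: "a m \<le> (1 + e0) * b m" if "m \<in> V - B" for m
        using that ratio1[OF e0, of s m] unfolding B_def a_def b_def by auto
      have ta: "sum a (V \<inter> B) \<le> d"
        using sum_pmf_le[of "V \<inter> B" "{x. real x < (real s + 1) / (2 + e0)}" "Bin s"] V lo
        unfolding a_def B_def by auto
      have "sum b (V \<inter> B) \<le> measure_pmf.prob (map_pmf Suc (Bin s)) (V \<inter> B)"
        unfolding b_def using V by (intro sum_pmf_le) auto
      also have "\<dots> = measure_pmf.prob (Bin s) (Suc -` (V \<inter> B))" by (simp add: measure_map_pmf)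
      also have "\<dots> \<le> measure_pmf.prob (Bin s) {x. real x < (real s + 1) / (2 + e0)}"
        by (intro measure_pmf.finite_measure_mono) (auto simp: B_def)
      finally have tb: "sum b (V \<inter> B) \<le> d" using lo by linarith
      note cr = core_real[OF V a0 b0 q e0 ab ta tb]
      from yy show ?thesis
      proof
        assume "y = 0" then show ?thesis using cr(1) True vv P0 P1 by simp
      next
        assume "y = 1" then show ?thesis using cr(2) True vv P0 P1 by simp
      qed
    next
      case False
      with uv have uu: "u = 1" and vv: "v = 0" by auto
      define B where "B = {m. (1 + e0) * (real s + 1) / (2 + e0) < real m}"
      have ab: "b m \<le> (1 + e0) * a m" if "m \<in> V - B" for m
        using that ratio2[OF e0, of m s] unfolding B_def a_def b_def by auto
      have "sum a (V \<inter> B) \<le> measure_pmf.prob (Bin s) {x. (1 + e0) * (real s + 1) / (2 + e0) < real x + 1}"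
        unfolding a_def using V by (intro sum_pmf_le) (auto simp: B_def)
      then have ta: "sum a (V \<inter> B) \<le> d" using hi by linarith
      have "sum b (V \<inter> B) \<le> measure_pmf.prob (map_pmf Suc (Bin s)) (V \<inter> B)"
        unfolding b_def using V by (intro sum_pmf_le) auto
      also have "\<dots> = measure_pmf.prob (Bin s) (Suc -` (V \<inter> B))" by (simp add: measure_map_pmf)
      also have "\<dots> \<le> measure_pmf.prob (Bin s) {x. (1 + e0) * (real s + 1) / (2 + e0) < real x + 1}"
        by (intro measure_pmf.finite_measure_mono) (auto simp: B_def)
      finally have tb: "sum b (V \<inter> B) \<le> d" using hi by linarith
      note cr = core_real[OF V b0 a0 q e0 ab tb ta]
      from yy show ?thesis
      proof
        assume "y = 0" then show ?thesis using cr(2) uu vv P0 P1 by simp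
      next
        assume "y = 1" then show ?thesis using cr(1) uu vv P0 P1 by simp
      qed
    qed
  qed
qed

lemma tails:
  fixes \<delta> e0 :: real and s :: nat
  assumes d0: "\<delta> > 0" and d2: "\<delta> \<le> 2" and sL: "real s > 8 * ln (4 / \<delta>)"
    and e0_def: "e0 = sqrt (32 * ln (4 / \<delta>) / real s)"
  shows "e0 \<ge> 0"
    and "measure_pmf.prob (Bin s) {x. real x < (real s + 1) / (2 + e0)} \<le> \<delta> / 2"
    and "measure_pmf.prob (Bin s) {x. (1 + e0) * (real s + 1) / (2 + e0) < real x + 1} \<le> \<delta> / 2"
proof -
  define L where "L = ln (4 / \<delta>)"
  have l2: "2 / 3 \<le> ln (2::real)" by (rule ln2_ge_two_thirds)
  have "4 / \<delta> \<ge> 2" using d0 d2 by (simp add: field_simps)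
  then have L2: "L \<ge> ln 2" unfolding L_def using d0 by (subst ln_le_cancel_iff) auto
  then have Lpos: "L > 0" using l2 by linarith
  have spos: "real s > 0" using sL Lpos L_def by linarith
  then have s0: "s > 0" by simp
  have e0L: "e0 = sqrt (32 * L / real s)" using e0_def L_def by simp
  have nn: "32 * L / real s \<ge> 0" using Lpos spos by simp
  then have e0sq: "e0 ^ 2 = 32 * L / real s" unfolding e0L by simp
  show e0pos: "e0 \<ge> 0" unfolding e0L using nn by simp
  have "32 * L / real s < 4" using sL spos by (simp add: L_def field_simps)
  then have "e0 ^ 2 < 2 ^ 2" using e0sq by simp
  then have e02: "e0 < 2" using e0pos by (simp add: power_less_imp_less_base[of e0 2 2])
  have Ls: "L * real s \<ge> 1/2"
  proof -
    have "L * real s \<ge> L * (8 * L)" using sL Lpos unfolding L_def by (simp add: mult_left_mono)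
    moreover have "L * (8 * L) \<ge> (2/3) * (8 * (2/3))" using L2 l2
      by (intro mult_mono) auto
    ultimately show ?thesis by simp
  qed
  have es: "(e0 * real s) ^ 2 = 32 * L * real s"
    using e0sq spos by (simp add: power_mult_distrib field_simps power2_eq_square)
  have es2: "e0 * real s \<ge> 2"
  proof -
    have "(e0 * real s) ^ 2 \<ge> 2 ^ 2" using es Ls by simp
    then show ?thesis using e0pos spos by (meson abs_le_square_iff order.trans abs_ge_self
        power2_le_iff_abs_le zero_le_mult_iff less_imp_le  pos2 zero_le_numeral abs_of_nonneg)
  qed
  define t where "t = (e0 * real s - 2) / (2 * (2 + e0))"
  have t8: "t \<ge> (e0 * real s - 2) / 8"
    unfolding t_def using es2 e02 e0pos by (intro divide_left_mono) auto
  have "(e0 * real s - 2) / 8 \<ge> 0" using es2 by simp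
  then have t0: "t \<ge> 0" using t8 by linarith
  have "2 * t ^ 2 / real s \<ge> 2 * ((e0 * real s - 2) / 8) ^ 2 / real s"
    using t8 es2 spos by (intro divide_right_mono mult_left_mono power_mono) auto
  also have "2 * ((e0 * real s - 2) / 8) ^ 2 / real s = ((e0 * real s) ^ 2 - 4 * (e0 * real s) + 4) / (32 * real s)"
    using spos by (simp add: power2_eq_square field_simps)
  also have "\<dots> = L - e0 / 8 + 1 / (8 * real s)"
    using spos unfolding es by (simp add: field_simps)
  finally have "2 * t ^ 2 / real s \<ge> L - e0 / 8 + 1 / (8 * real s)" .
  moreover have "1 / (8 * real s) \<ge> 0" using spos by simp
  ultimately have "2 * t ^ 2 / real s \<ge> L - e0 / 8" by linarith
  then have key: "- 2 * t ^ 2 / real s \<le> ln 2 - L" using e02 l2 by simp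
  have "exp (- 2 * t ^ 2 / real s) \<le> exp (ln 2 - L)" using key by simp
  also have "exp (ln 2 - L) = \<delta> / 2" unfolding L_def using d0
    by (simp add: exp_diff)
  finally have bound: "exp (- 2 * t ^ 2 / real s) \<le> \<delta> / 2" .
  have bd: "binomial_distribution (1/2)" by unfold_locales auto
  have theta: "(real s + 1) / (2 + e0) = real s * (1/2) - t"
    unfolding t_def using e0pos by (simp add: field_simps)
  have K: "(1 + e0) * (real s + 1) / (2 + e0) - 1 = real s * (1/2) + t"
    unfolding t_def using e0pos by (simp add: field_simps)
  have "measure_pmf.prob (Bin s) {x. real x < (real s + 1) / (2 + e0)}
        \<le> measure_pmf.prob (Bin s) {x. real x \<le> real s * (1/2) - t}"
    unfolding theta by (intro measure_pmf.finite_measure_mono) auto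
  also have "\<dots> \<le> exp (- 2 * t ^ 2 / real s)"
    by (rule binomial_distribution.prob_le[OF bd s0 t0])
  finally show "measure_pmf.prob (Bin s) {x. real x < (real s + 1) / (2 + e0)} \<le> \<delta> / 2"
    using bound by linarith
  have "measure_pmf.prob (Bin s) {x. (1 + e0) * (real s + 1) / (2 + e0) < real x + 1}
        \<le> measure_pmf.prob (Bin s) {x. real s * (1/2) + t \<le> real x}"
    using K by (intro measure_pmf.finite_measure_mono) auto
  also have "\<dots> \<le> exp (- 2 * t ^ 2 / real s)"
    by (rule binomial_distribution.prob_ge[OF bd s0 t0])
  finally show "measure_pmf.prob (Bin s) {x. (1 + e0) * (real s + 1) / (2 + e0) < real x + 1} \<le> \<delta> / 2"
    using bound by linarith
qed

lemma exp_map: "measure_pmf.expectation (map_pmf (\<lambda>B. c + B) M) (indicator W) = measure_pmf.prob M {b. (c::nat) + b \<in> W}"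
proof -
  have "measure_pmf.expectation (map_pmf (\<lambda>B. c + B) M) (indicator W) = measure_pmf.prob (map_pmf (\<lambda>B. c + B) M) W"
    using Bochner_Integration.integral_indicator[of "measure_pmf (map_pmf (\<lambda>B. c + B) M)" W] by (simp only: space_measure_pmf Int_UNIV_right)
  also have "\<dots> = measure_pmf.prob M ((\<lambda>B. c + B) -` W)" by (rule measure_map_pmf)
  also have "(\<lambda>B. c + B) -` W = {b. c + b \<in> W}" by auto
  finally show ?thesis .
qed

lemma prob_C:
  assumes "s \<le> n"
  shows "measure_pmf.prob (C_alg n s X) W =
    (\<Sum>H\<in>{H. H \<subseteq> {..<n} \<and> card H = s}.
        measure_pmf.prob (Bin s) {b. (\<Sum>i\<in>{..<n} - H. of_bool (X ! i)) + b \<in> W})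
     / real (card {H. H \<subseteq> {..<n} \<and> card H = s})"
proof -
  define S where "S = {H. H \<subseteq> {..<n} \<and> card H = s}"
  have fin: "finite S" unfolding S_def by (rule finite_subset[of _ "Pow {..<n}"]) auto
  have ne: "S \<noteq> {}"
  proof -
    obtain H where "H \<subseteq> {..<n}" "card H = s"
      using assms by (metis card_lessThan obtain_subset_with_card_n)
    then show ?thesis unfolding S_def by auto
  qed
  have eq: "C_alg n s X = pmf_of_set S \<bind> (\<lambda>H. map_pmf (\<lambda>B. (\<Sum>i\<in>{..<n} - H. of_bool (X ! i)) + B) (Bin s))"
    unfolding C_alg_def S_def map_pmf_def by simp
  have "measure_pmf.prob (C_alg n s X) W = measure_pmf.expectation (C_alg n s X) (indicator W)"
    by (simp add: integral_indicator)
  also have "\<dots> = (\<Sum>H\<in>S. measure_pmf.expectation (map_pmf (\<lambda>B. (\<Sum>i\<in>{..<n} - H. of_bool (X ! i)) + B) (Bin s)) (indicator W) /\<^sub>R real (card S))"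
    unfolding eq by (rule pmf_expectation_bind_pmf_of_set[OF ne fin]) (simp add: set_pmf_binomial_eq)
  also have "\<dots> = (\<Sum>H\<in>S. measure_pmf.prob (Bin s) {b. (\<Sum>i\<in>{..<n} - H. of_bool (X ! i)) + b \<in> W} / real (card S))"
    by (intro sum.cong refl) (simp only: exp_map real_scaleR_def divide_inverse mult.commute)
  also have "\<dots> = (\<Sum>H\<in>S. measure_pmf.prob (Bin s) {b. (\<Sum>i\<in>{..<n} - H. of_bool (X ! i)) + b \<in> W}) / real (card S)"
    by (rule sum_divide_distrib[symmetric])
  finally show ?thesis unfolding S_def .
qed

lemma dc:
  fixes f :: "nat set \<Rightarrow> real"
  assumes i: "i < n" and s0: "0 < s" and sn: "s < n"
  shows "sum f {H. H \<subseteq> {..<n} \<and> card H = s} =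
    (\<Sum>(G, J)\<in>Sigma {G. G \<subseteq> {..<n} - {i} \<and> card G = s - 1} (\<lambda>G. ({..<n} - {i}) - G).
        f (insert i G) / real (n - s) + f (insert J G) / real s)"
proof -
  define R where "R = {..<n} - {i}"
  define S' where "S' = {G. G \<subseteq> R \<and> card G = s - 1}"
  define T where "T = Sigma S' (\<lambda>G. R - G)"
  define S1 where "S1 = {H. H \<subseteq> {..<n} \<and> card H = s \<and> i \<in> H}"
  define S2 where "S2 = {H. H \<subseteq> R \<and> card H = s}"
  have finR: "finite R" unfolding R_def by simp
  have finS': "finite S'" unfolding S'_def by (rule finite_subset[of _ "Pow R"]) (auto simp: finR)
  have finT: "finite T" unfolding T_def using finS' finR by auto
  have finS1: "finite S1" unfolding S1_def by (rule finite_subset[of _ "Pow {..<n}"]) auto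
  have finS2: "finite S2" unfolding S2_def by (rule finite_subset[of _ "Pow R"]) (auto simp: finR)
  have cardR: "card R = n - 1" unfolding R_def using i by simp
  have Sdec: "{H. H \<subseteq> {..<n} \<and> card H = s} = S1 \<union> S2" unfolding S1_def S2_def R_def by auto
  have disj: "S1 \<inter> S2 = {}" unfolding S1_def S2_def R_def by auto
  have a1: "(\<Sum>(G, J)\<in>T. f (insert i G) / real (n - s)) = (\<Sum>G\<in>S'. f (insert i G))"
  proof -
    have "(\<Sum>(G, J)\<in>T. f (insert i G) / real (n - s)) = (\<Sum>G\<in>S'. \<Sum>J\<in>R - G. f (insert i G) / real (n - s))"
      unfolding T_def using finS' finR by (subst sum.Sigma) auto
    also have "\<dots> = (\<Sum>G\<in>S'. f (insert i G))"
    proof (rule sum.cong[OF refl])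
      fix G assume G: "G \<in> S'"
      then have "G \<subseteq> R" "card G = s - 1" unfolding S'_def by auto
      then have "card (R - G) = n - s" using finR cardR s0 sn
        by (simp add: card_Diff_subset finite_subset)
      then show "(\<Sum>J\<in>R - G. f (insert i G) / real (n - s)) = f (insert i G)"
        using sn by simp
    qed
    finally show ?thesis .
  qed
  have a2: "(\<Sum>G\<in>S'. f (insert i G)) = sum f S1"
  proof (rule sum.reindex_bij_betw)
    show "bij_betw (insert i) S' S1"
    proof (rule bij_betwI[where g = "\<lambda>H. H - {i}"])
      show "insert i \<in> S' \<rightarrow> S1"
      proof
        fix G assume "G \<in> S'"
        then have G: "G \<subseteq> R" "card G = s - 1" unfolding S'_def by auto
        have "finite G" using G finR finite_subset by blast
        moreover have "i \<notin> G" using G unfolding R_def by auto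
        ultimately have "card (insert i G) = s" using G s0 by simp
        then show "insert i G \<in> S1" using G i unfolding S1_def R_def by auto
      qed
      show "(\<lambda>H. H - {i}) \<in> S1 \<rightarrow> S'"
      proof
        fix H assume "H \<in> S1"
        then have H: "H \<subseteq> {..<n}" "card H = s" "i \<in> H" unfolding S1_def by auto
        have "finite H" using H finite_subset by blast
        then have "card (H - {i}) = s - 1" using H by simp
        then show "H - {i} \<in> S'" using H unfolding S'_def R_def by auto
      qed
      show "insert i G - {i} = G" if "G \<in> S'" for G using that unfolding S'_def R_def by auto
      show "insert i (H - {i}) = H" if "H \<in> S1" for H using that unfolding S1_def by auto
    qed
  qed
  have bij: "bij_betw (\<lambda>(G, J). (insert J G, J)) T (Sigma S2 (\<lambda>H. H))"
    proof (rule bij_betwI[where g = "\<lambda>(H, J). (H - {J}, J)"])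
      show "(\<lambda>(G, J). (insert J G, J)) \<in> T \<rightarrow> Sigma S2 (\<lambda>H. H)"
      proof
        fix p assume "p \<in> T"
        then obtain G J where p: "p = (G, J)" and G: "G \<subseteq> R" "card G = s - 1" and J: "J \<in> R" "J \<notin> G"
          unfolding T_def S'_def by auto
        have "finite G" using G finR finite_subset by blast
        then have "card (insert J G) = s" using G J s0 by simp
        then show "(\<lambda>(G, J). (insert J G, J)) p \<in> Sigma S2 (\<lambda>H. H)"
          using p G J unfolding S2_def by auto
      qed
      show "(\<lambda>(H, J). (H - {J}, J)) \<in> Sigma S2 (\<lambda>H. H) \<rightarrow> T"
      proof
        fix p assume "p \<in> Sigma S2 (\<lambda>H. H)"
        then obtain H J where p: "p = (H, J)" and H: "H \<subseteq> R" "card H = s" and J: "J \<in> H"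
          unfolding S2_def by auto
        have "finite H" using H finR finite_subset by blast
        then have "card (H - {J}) = s - 1" using H J by simp
        then show "(\<lambda>(H, J). (H - {J}, J)) p \<in> T"
          using p H J unfolding T_def S'_def by auto
      qed
      show "(\<lambda>(H, J). (H - {J}, J)) ((\<lambda>(G, J). (insert J G, J)) p) = p" if "p \<in> T" for p
        using that unfolding T_def by auto
      show "(\<lambda>(G, J). (insert J G, J)) ((\<lambda>(H, J). (H - {J}, J)) p) = p" if "p \<in> Sigma S2 (\<lambda>H. H)" for p
        using that by auto
    qed
  have b1: "(\<Sum>(G, J)\<in>T. f (insert J G) / real s) = (\<Sum>(H, J)\<in>Sigma S2 (\<lambda>H. H). f H / real s)"
  proof -
    have "(\<Sum>(H, J)\<in>Sigma S2 (\<lambda>H. H). f H / real s) = (\<Sum>p\<in>T. (\<lambda>(H, J). f H / real s) ((\<lambda>(G, J). (insert J G, J)) p))"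
      by (rule sum.reindex_bij_betw[symmetric, OF bij])
    also have "\<dots> = (\<Sum>(G, J)\<in>T. f (insert J G) / real s)"
      by (intro sum.cong refl) auto
    finally show ?thesis by simp
  qed
  have b2: "(\<Sum>(H, J)\<in>Sigma S2 (\<lambda>H. H). f H / real s) = sum f S2"
  proof -
    have "(\<Sum>(H, J)\<in>Sigma S2 (\<lambda>H. H). f H / real s) = (\<Sum>H\<in>S2. \<Sum>J\<in>H. f H / real s)"
      using finS2 by (subst sum.Sigma) (auto simp: S2_def intro: finite_subset[OF _ finR])
    also have "\<dots> = sum f S2"
    proof (rule sum.cong[OF refl])
      fix H assume "H \<in> S2"
      then have "card H = s" unfolding S2_def by auto
      then show "(\<Sum>J\<in>H. f H / real s) = f H" using s0 by simp
    qed
    finally show ?thesis .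
  qed
  have "sum f {H. H \<subseteq> {..<n} \<and> card H = s} = sum f S1 + sum f S2"
    unfolding Sdec using finS1 finS2 disj by (rule sum.union_disjoint)
  also have "\<dots> = (\<Sum>(G, J)\<in>T. f (insert i G) / real (n - s)) + (\<Sum>(G, J)\<in>T. f (insert J G) / real s)"
    using a1 a2 b1 b2 by simp
  also have "\<dots> = (\<Sum>(G, J)\<in>T. f (insert i G) / real (n - s) + f (insert J G) / real s)"
    by (subst sum.distrib[symmetric]) (simp add: case_prod_beta)
  finally show ?thesis unfolding T_def S'_def R_def .
qed

lemma comb_aux:
  fixes q p1 p2 p3 E d :: real
  assumes "(1 - q) * p1 + q * p2 \<le> E * ((1 - q) * p1 + q * p3) + d / 2"
  shows "(1 - q) * (p1 - E * p1 - d / 2) + q * (p2 - E * p3 - d / 2) \<le> 0"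
proof -
  have "(1 - q) * (p1 - E * p1 - d / 2) + q * (p2 - E * p3 - d / 2)
      = ((1 - q) * p1 + q * p2) - (E * ((1 - q) * p1 + q * p3) + d / 2)"
    by (simp add: field_simps)
  then show ?thesis using assms by linarith
qed

theorem claim4p5:
  fixes n s :: nat and \<delta> :: real
  assumes "\<delta> > 0" and "s \<le> n" and "real s > 8 * ln (4 / \<delta>)"
  shows "diff_private n (C_alg n s)
           (sqrt (32 * ln (4 / \<delta>) / real s) * (1 - real s / real n)) (\<delta> / 2)"
proof -
  note d0 = assms(1) and sn = assms(2) and sL = assms(3)
  define e0 where "e0 = sqrt (32 * ln (4 / \<delta>) / real s)"
  define q where "q = 1 - real s / real n"
  have eps: "sqrt (32 * ln (4 / \<delta>) / real s) * (1 - real s / real n) = q * e0"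
    by (simp add: e0_def q_def)
  show ?thesis
    unfolding diff_private_def eps
  proof (intro allI impI)
    fix X X' :: "bool list" and W :: "nat set"
    assume nb: "neighbouring n X X'"
    show "measure_pmf.prob (C_alg n s X) W \<le> exp (q * e0) * measure_pmf.prob (C_alg n s X') W + \<delta> / 2"
    proof (cases "\<delta> > 2")
      case True
      have "measure_pmf.prob (C_alg n s X) W \<le> 1" by simp
      moreover have "exp (q * e0) * measure_pmf.prob (C_alg n s X') W \<ge> 0" by simp
      ultimately show ?thesis using True by linarith
    next
      case False
      then have d2: "\<delta> \<le> 2" by simp
      note tl = tails[OF d0 d2 sL e0_def]
      have e0: "e0 \<ge> 0" by (rule tl(1))
      have "4 / \<delta> \<ge> 2" using d0 d2 by (simp add: field_simps)
      then have "ln (4 / \<delta>) > 0" by (intro ln_gt_zero) linarith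
      then have spos: "s > 0" using sL by simp
      then have npos: "n > 0" using sn by simp
      have q01: "0 \<le> q" "q \<le> 1" unfolding q_def using sn npos by (simp_all add: field_simps)
      define S where "S = {H. H \<subseteq> {..<n} \<and> card H = s}"
      define g where "g Y H = measure_pmf.prob (Bin s) {b. (\<Sum>i\<in>{..<n} - H. of_bool (Y ! i)) + b \<in> W}"
        for Y :: "bool list" and H :: "nat set"
      have pX: "measure_pmf.prob (C_alg n s Y) W = sum (g Y) S / real (card S)" for Y
        unfolding g_def S_def by (rule prob_C[OF sn])
      have finS: "finite S" unfolding S_def by (rule finite_subset[of _ "Pow {..<n}"]) auto
      have neS: "S \<noteq> {}"
      proof -
        obtain H where "H \<subseteq> {..<n}" "card H = s"
          using sn by (metis card_lessThan obtain_subset_with_card_n)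
        then show ?thesis unfolding S_def by auto
      qed
      have cS: "real (card S) > 0" using finS neS by (simp add: card_gt_0_iff)
      show ?thesis
      proof (cases "s = n")
        case True
        have "g X H = g X' H" if "H \<in> S" for H
        proof -
          have "H \<subseteq> {..<n}" "card H = n" using that True unfolding S_def by auto
          then have "H = {..<n}" by (metis card_lessThan card_subset_eq finite_lessThan)
          then show ?thesis unfolding g_def by simp
        qed
        then have "sum (g X) S = sum (g X') S" by (rule sum.cong[OF refl])
        then have "measure_pmf.prob (C_alg n s X) W = measure_pmf.prob (C_alg n s X') W"
          using pX by simp
        moreover have "q = 0" unfolding q_def using True npos by simp
        ultimately show ?thesis using d0 by simp
      next
        case False
        then have sn': "s < n" using sn by simp
        obtain i where i: "i < n" and eqX: "\<And>j. j < n \<Longrightarrow> j \<noteq> i \<Longrightarrow> X ! j = X' ! j"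
          using nb unfolding neighbouring_def by blast
        define E where "E = exp (q * e0)"
        have main: "sum (\<lambda>H. g X H - E * g X' H - \<delta> / 2) S \<le> 0"
        proof -
          have "sum (\<lambda>H. g X H - E * g X' H - \<delta> / 2) S =
            (\<Sum>(G, J)\<in>Sigma {G. G \<subseteq> {..<n} - {i} \<and> card G = s - 1} (\<lambda>G. ({..<n} - {i}) - G).
              (\<lambda>H. g X H - E * g X' H - \<delta> / 2) (insert i G) / real (n - s)
              + (\<lambda>H. g X H - E * g X' H - \<delta> / 2) (insert J G) / real s)"
            unfolding S_def by (rule dc[OF i spos sn'])
          also have "\<dots> \<le> 0"
          proof -
            have tm: "(g X (insert i G) - E * g X' (insert i G) - \<delta> / 2) / real (n - s)
              + (g X (insert J G) - E * g X' (insert J G) - \<delta> / 2) / real s \<le> 0"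
              if G: "G \<subseteq> {..<n} - {i}" "card G = s - 1" and J: "J \<in> {..<n} - {i} - G" for G J
            proof -
            define U where "U = {..<n} - insert i (insert J G)"
            define A where "A = (\<Sum>j\<in>U. of_bool (X ! j) :: nat)"
            have finU: "finite U" unfolding U_def by simp
            have JU: "J \<notin> U" and iU: "i \<notin> U" unfolding U_def by auto
            have U1: "{..<n} - insert i G = insert J U" using J G unfolding U_def by auto
            have U2: "{..<n} - insert J G = insert i U" using J G i unfolding U_def by auto
            have AX': "(\<Sum>j\<in>U. of_bool (X' ! j) :: nat) = A"
              unfolding A_def by (rule sum.cong[OF refl]) (auto simp: U_def eqX)
            have XJ: "X' ! J = X ! J" using J eqX by auto
            have s1: "(\<Sum>j\<in>{..<n} - insert i G. of_bool (Y ! j) :: nat) = (\<Sum>j\<in>U. of_bool (Y ! j)) + of_bool (Y ! J)" for Y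
              unfolding U1 by (subst sum.insert[OF finU JU]) (simp add: add.commute)
            have s2: "(\<Sum>j\<in>{..<n} - insert J G. of_bool (Y ! j) :: nat) = (\<Sum>j\<in>U. of_bool (Y ! j)) + of_bool (Y ! i)" for Y
              unfolding U2 by (subst sum.insert[OF finU iU]) (simp add: add.commute)
            define P where "P c = measure_pmf.prob (Bin s) {b. A + c + b \<in> W}" for c
            have g1: "g X (insert i G) = P (of_bool (X ! J))"
              unfolding g_def P_def s1 A_def ..
            have g1': "g X' (insert i G) = P (of_bool (X ! J))"
              unfolding g_def P_def s1 AX' XJ ..
            have g2: "g X (insert J G) = P (of_bool (X ! i))"
              unfolding g_def P_def s2 A_def ..
            have g2': "g X' (insert J G) = P (of_bool (X' ! i))"
              unfolding g_def P_def s2 AX' ..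
            have cr: "(1 - q) * P (of_bool (X ! J)) + q * P (of_bool (X ! i))
                \<le> E * ((1 - q) * P (of_bool (X ! J)) + q * P (of_bool (X' ! i))) + \<delta> / 2"
              unfolding P_def E_def by (rule core[OF q01 e0 tl(2) tl(3)]) auto
            define F1 where "F1 = g X (insert i G) - E * g X' (insert i G) - \<delta> / 2"
            define F2 where "F2 = g X (insert J G) - E * g X' (insert J G) - \<delta> / 2"
            have comb: "(1 - q) * F1 + q * F2 \<le> 0"
              unfolding F1_def F2_def g1 g1' g2 g2' by (rule comb_aux[OF cr])
            have rns: "real (n - s) = real n - real s" using sn by (simp add: of_nat_diff)
            have ns: "real n - real s > 0" using sn' by simp
            have ident: "F1 / real (n - s) + F2 / real s = (real n / (real s * (real n - real s))) * ((1 - q) * F1 + q * F2)"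
              unfolding rns q_def using spos npos ns by (simp add: field_simps)
            have "real n / (real s * (real n - real s)) \<ge> 0" using ns spos by simp
            then have "F1 / real (n - s) + F2 / real s \<le> 0"
              unfolding ident by (rule mult_nonneg_nonpos[OF _ comb])
            then show "(g X (insert i G) - E * g X' (insert i G) - \<delta> / 2) / real (n - s)
              + (g X (insert J G) - E * g X' (insert J G) - \<delta> / 2) / real s \<le> 0"
              unfolding F1_def F2_def .
          qed
          show ?thesis by (rule sum_nonpos) (auto intro: tm)
          qed
          finally show ?thesis .
        qed
        have "sum (g X) S \<le> E * sum (g X') S + real (card S) * (\<delta> / 2)"
          using main by (simp add: sum_subtractf sum_distrib_left)
        then have "sum (g X) S / real (card S) \<le> (E * sum (g X') S + real (card S) * (\<delta> / 2)) / real (card S)"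
          using cS by (simp add: divide_right_mono)
        also have "\<dots> = E * (sum (g X') S / real (card S)) + \<delta> / 2"
          using cS by (simp add: field_simps)
        finally show ?thesis unfolding pX E_def .
      qed
    qed
  qed
qed

end
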